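(* $\mathcal{I}_{\mathrm{id}}\subsetneq\mathrm{HDZ}$; that is, every set in the Yorioka ideal $\mathcal{I}_{\mathrm{id}}$ has Hausdorff dimension $0$, and there is a subset of $2^\omega$ of Hausdorff dimension $0$ not belonging to $\mathcal{I}_{\mathrm{id}}$.
   Context: $2^\omega$ carries the metric $d(x,y)=2^{-\min\{n:x(n)\neq y(n)\}}$ for $x\neq y$ and $d(x,x)=0$. For $A\subseteq 2^\omega$, $s>0$: $\mathcal{H}^s(A)=\lim_{\delta\to0}\inf\{\sum_n(\operatorname{diam}C_n)^s:A\subseteq\bigcup_nC_n,\ \operatorname{diam}C_n\le\delta\}$, $\dim_H(A)=\inf\{s>0:\mathcal{H}^s(A)=0\}$, and $\mathrm{HDZ}=\{A\subseteq2^\omega:\dim_H(A)=0\}$. For $\sigma\in(2^{<\omega})^\omega$, let $(\operatorname{ht}\sigma)(n)=|\sigma(n)|$ and $[\sigma]_\infty=\{x\in2^\omega:\exists^\infty n\ \sigma(n)\subseteq x\}$. For $g\in\omega^\omega$, $\mathcal{J}_g=\{A\subseteq2^\omega:\exists\sigma\in(2^{<\omega})^\omega\,(\operatorname{ht}\sigma=g\wedge A\subseteq[\sigma]_\infty)\}$. For $f,g\in\omega^\omega$, $f\ll g$ iff for every $k\in\omega$, $f(n^k)\le g(n)$ for all but finitely many $n$. For increasing $f\in\omega^\omega$, the Yorioka ideal is $\mathcal{I}_f=\bigcup_{g\gg f}\mathcal{J}_g$; $\mathrm{id}$ is the identity function on $\omega$. *)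

theory Defs
  imports "HOL-Analysis.Analysis"
begin

type_synonym cantor = "nat \<Rightarrow> bool"

definition cdist :: "cantor \<Rightarrow> cantor \<Rightarrow> real" where
  "cdist x y = (if x = y then 0 else 2 powr (- real (LEAST n. x n \<noteq> y n)))"

definition cdiam :: "cantor set \<Rightarrow> real" where
  "cdiam C = (if C = {} then 0 else (SUP p\<in>C \<times> C. cdist (fst p) (snd p)))"

text \<open>Hausdorff measure: the limit as delta tends to 0 of the (monotone) delta-approximations
  is written as the supremum over delta > 0.\<close>
definition hausdorff_approx :: "real \<Rightarrow> real \<Rightarrow> cantor set \<Rightarrow> ennreal" where
  "hausdorff_approx s \<delta> A =
     (INF C\<in>{C :: nat \<Rightarrow> cantor set. A \<subseteq> (\<Union>n. C n) \<and> (\<forall>n. cdiam (C n) \<le> \<delta>)}.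
        (\<Sum>n. ennreal (cdiam (C n) powr s)))"

definition hausdorff_measure :: "real \<Rightarrow> cantor set \<Rightarrow> ennreal" where
  "hausdorff_measure s A = (SUP \<delta>\<in>{0<..}. hausdorff_approx s \<delta> A)"

definition hausdorff_dim :: "cantor set \<Rightarrow> real" where
  "hausdorff_dim A = Inf {s. s > 0 \<and> hausdorff_measure s A = 0}"

definition HDZ :: "cantor set set" where
  "HDZ = {A. hausdorff_dim A = 0}"

definition is_prefix :: "bool list \<Rightarrow> cantor \<Rightarrow> bool" where
  "is_prefix s x \<longleftrightarrow> (\<forall>i<length s. s ! i = x i)"

definition inf_often_set :: "(nat \<Rightarrow> bool list) \<Rightarrow> cantor set" where
  "inf_often_set \<sigma> = {x. \<exists>\<^sub>\<infinity>n. is_prefix (\<sigma> n) x}"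

definition J_ideal :: "(nat \<Rightarrow> nat) \<Rightarrow> cantor set set" where
  "J_ideal g = {A. \<exists>\<sigma>. (\<forall>n. length (\<sigma> n) = g n) \<and> A \<subseteq> inf_often_set \<sigma>}"

definition ll :: "(nat \<Rightarrow> nat) \<Rightarrow> (nat \<Rightarrow> nat) \<Rightarrow> bool" (infix "\<lless>" 50) where
  "f \<lless> g \<longleftrightarrow> (\<forall>k::nat. \<forall>\<^sub>F n in sequentially. f (n ^ k) \<le> g n)"

definition yorioka :: "(nat \<Rightarrow> nat) \<Rightarrow> cantor set set" where
  "yorioka f = (\<Union>g\<in>{g. f \<lless> g}. J_ideal g)"

end

theory Submission
  imports Defs "HOL-Library.Sublist"
begin


lemma cdist_self: "cdist x x = 0" by (simp add: cdist_def)
lemma cdist_nonneg: "0 \<le> cdist x y" by (simp add: cdist_def)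
lemma cdist_le1: "cdist x y \<le> 1"
proof -
  have "2 powr (- real n) \<le> 2 powr 0" for n :: nat by (rule powr_mono) auto
  then show ?thesis by (simp add: cdist_def)
qed

lemma cdist_prefix:
  assumes "is_prefix t x" "is_prefix t y"
  shows "cdist x y \<le> 2 powr (- real (length t))"
proof (cases "x = y")
  case False
  then obtain m where m: "x m \<noteq> y m" by auto
  have "length t \<le> (LEAST n. x n \<noteq> y n)"
  proof (rule ccontr)
    assume "\<not> ?thesis"
    then have "(LEAST n. x n \<noteq> y n) < length t" by simp
    moreover have "x (LEAST n. x n \<noteq> y n) \<noteq> y (LEAST n. x n \<noteq> y n)"
      by (rule LeastI[of _ m]) (rule m)
    ultimately show False using assms by (auto simp: is_prefix_def)
  qed
  then show ?thesis using False by (simp add: cdist_def)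
qed (simp add: cdist_def)

lemma bdd_cdist: "bdd_above ((\<lambda>p. cdist (fst p) (snd p)) ` S)"
  by (rule bdd_aboveI[of _ 1]) (auto simp: cdist_le1)

lemma cdiam_nonneg: "0 \<le> cdiam C"
proof (cases "C = {}")
  case False
  then obtain x where "x \<in> C" by auto
  then have "cdist (fst (x,x)) (snd (x,x)) \<le> (SUP p\<in>C \<times> C. cdist (fst p) (snd p))"
    by (intro cSUP_upper bdd_cdist) auto
  moreover have "cdist x x = 0" by (simp add: cdist_def)
  ultimately show ?thesis using False unfolding cdiam_def by simp
qed (simp add: cdiam_def)

lemma cdiam_cyl:
  assumes "C \<subseteq> {x. is_prefix t x}"
  shows "cdiam C \<le> 2 powr (- real (length t))"
proof (cases "C = {}")
  case False
  have "(SUP p\<in>C \<times> C. cdist (fst p) (snd p)) \<le> 2 powr (- real (length t))"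
  proof (rule cSUP_least)
    show "C \<times> C \<noteq> {}" using False by simp
    fix p assume "p \<in> C \<times> C"
    then have "is_prefix t (fst p)" "is_prefix t (snd p)" using assms by auto
    then show "cdist (fst p) (snd p) \<le> 2 powr (- real (length t))" by (rule cdist_prefix)
  qed
  then show ?thesis using False by (simp add: cdiam_def)
qed (simp add: cdiam_def)

lemma hm_zero:
  assumes "\<And>\<delta> \<epsilon>. \<delta> > 0 \<Longrightarrow> \<epsilon> > 0 \<Longrightarrow> \<exists>C. A \<subseteq> (\<Union>n. C n) \<and> (\<forall>n. cdiam (C n) \<le> \<delta>)
            \<and> (\<Sum>n. ennreal (cdiam (C n) powr s)) \<le> ennreal \<epsilon>"
  shows "hausdorff_measure s A = 0"
proof -
  have "hausdorff_approx s \<delta> A = 0" if "\<delta> > 0" for \<delta>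
  proof -
    have "hausdorff_approx s \<delta> A \<le> 0 + ennreal e" if "e > 0" for e
    proof -
      obtain C where C: "A \<subseteq> (\<Union>n. C n)" "\<forall>n. cdiam (C n) \<le> \<delta>"
        "(\<Sum>n. ennreal (cdiam (C n) powr s)) \<le> ennreal e"
        using assms[OF \<open>\<delta> > 0\<close> \<open>e > 0\<close>] by blast
      show ?thesis unfolding hausdorff_approx_def
      proof (rule INF_lower2[of C])
        show "C \<in> {C. A \<subseteq> \<Union> (range C) \<and> (\<forall>n. cdiam (C n) \<le> \<delta>)}" using C(1,2) by blast
        show "(\<Sum>n. ennreal (cdiam (C n) powr s)) \<le> 0 + ennreal e" using C(3) by simp
      qed
    qed
    then have "hausdorff_approx s \<delta> A \<le> 0" by (rule ennreal_le_epsilon)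
    then show ?thesis by (rule antisym) simp
  qed
  then have "(SUP \<delta>\<in>{0<..}. hausdorff_approx s \<delta> A) = (SUP \<delta>\<in>{0::real<..}. (0::ennreal))"
    by (intro SUP_cong) auto
  then show ?thesis unfolding hausdorff_measure_def by simp
qed

lemma HDZ_I:
  assumes "\<And>s. s > 0 \<Longrightarrow> hausdorff_measure s A = 0"
  shows "A \<in> HDZ"
proof -
  have "{s. s > 0 \<and> hausdorff_measure s A = 0} = {0<..}" using assms by auto
  then show ?thesis by (simp add: HDZ_def hausdorff_dim_def)
qed



lemma pw: "(2 powr (- real k)) powr s = (2 powr (-s)) ^ k"
  by (simp add: powr_powr powr_realpow[symmetric] mult.commute)

lemma ev_small:
  fixes r :: real assumes "0 \<le> r" "r < 1" "e > 0"
  shows "\<forall>\<^sub>F M in sequentially. r ^ M < e"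
  using order_tendstoD(2)[OF LIMSEQ_power_zero[of r] \<open>e>0\<close>] assms by simp

lemma J_HDZ:
  assumes g: "\<forall>\<^sub>F n in sequentially. n \<le> g n" and A: "A \<in> J_ideal g"
  shows "A \<in> HDZ"
proof (rule HDZ_I)
  fix s :: real assume s: "s > 0"
  obtain \<sigma> where len: "\<And>n. length (\<sigma> n) = g n" and sub: "A \<subseteq> inf_often_set \<sigma>"
    using A unfolding J_ideal_def by blast
  obtain N0 where N0: "\<And>n. n \<ge> N0 \<Longrightarrow> n \<le> g n" using g by (auto simp: eventually_sequentially)
  define r where "r = (2::real) powr (-s)"
  have "(2::real) powr (-s) < 2 powr 0" by (rule powr_less_mono) (use s in auto)
  then have r0: "0 < r" and r1: "r < 1" by (auto simp: r_def)
  show "hausdorff_measure s A = 0"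
  proof (rule hm_zero)
    fix \<delta> \<epsilon> :: real assume d: "\<delta> > 0" and e: "\<epsilon> > 0"
    have "\<forall>\<^sub>F M in sequentially. (1/2::real) ^ M < \<delta> \<and> r ^ M < \<epsilon> * (1 - r) \<and> N0 \<le> M"
      using ev_small[of "1/2" \<delta>] ev_small[of r "\<epsilon> * (1 - r)"] d e r0 r1
      by (intro eventually_conj eventually_ge_at_top) auto
    then obtain M where M: "(1/2::real) ^ M < \<delta>" "r ^ M < \<epsilon> * (1 - r)" "N0 \<le> M"
      by (auto simp: eventually_sequentially)
    define C where "C n = {x. is_prefix (\<sigma> (n + M)) x}" for n
    have diam: "cdiam (C n) \<le> 2 powr (- real (n + M))" for n
    proof -
      have "cdiam (C n) \<le> 2 powr (- real (g (n + M)))"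
        unfolding C_def by (rule order.trans[OF cdiam_cyl[OF order.refl]]) (simp add: len)
      also have "\<dots> \<le> 2 powr (- real (n + M))" using N0[of "n+M"] M(3) by simp
      finally show ?thesis .
    qed
    show "\<exists>C. A \<subseteq> (\<Union>n. C n) \<and> (\<forall>n. cdiam (C n) \<le> \<delta>)
            \<and> (\<Sum>n. ennreal (cdiam (C n) powr s)) \<le> ennreal \<epsilon>"
    proof (intro exI conjI allI)
      show "A \<subseteq> (\<Union>n. C n)"
      proof
        fix x assume "x \<in> A"
        then have "\<exists>\<^sub>\<infinity>n. is_prefix (\<sigma> n) x" using sub by (auto simp: inf_often_set_def)
        then obtain n where "n \<ge> M" "is_prefix (\<sigma> n) x" by (auto simp: INFM_nat_le)
        then have "x \<in> C (n - M)" by (simp add: C_def)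
        then show "x \<in> (\<Union>n. C n)" by blast
      qed
      fix n
      have "2 powr (- real (n + M)) \<le> (2::real) powr (- real M)" by simp
      also have "\<dots> = (1/2) ^ M" by (simp add: powr_minus powr_realpow power_one_over inverse_eq_divide)
      finally show "cdiam (C n) \<le> \<delta>" using diam[of n] M(1) by linarith
    next
      have le: "cdiam (C n) powr s \<le> r ^ M * r ^ n" for n
      proof -
        have "cdiam (C n) powr s \<le> (2 powr (- real (n + M))) powr s"
          by (rule powr_mono2) (use s diam cdiam_nonneg in auto)
        also have "\<dots> = r ^ M * r ^ n" unfolding pw r_def by (simp add: power_add)
        finally show ?thesis .
      qed
      have sm: "(\<lambda>n. r ^ M * r ^ n) sums (r ^ M * (1 / (1 - r)))"
        by (rule sums_mult, rule geometric_sums) (use r0 r1 in auto)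
      have "(\<Sum>n. ennreal (cdiam (C n) powr s)) \<le> (\<Sum>n. ennreal (r ^ M * r ^ n))"
        by (rule suminf_le) (auto intro: ennreal_leI le)
      also have "\<dots> = ennreal (r ^ M * (1 / (1 - r)))"
        by (rule suminf_ennreal_eq[OF _ sm]) (use r0 in simp)
      also have "\<dots> \<le> ennreal \<epsilon>"
        using M(2) r1 by (intro ennreal_leI) (simp add: field_simps)
      finally show "(\<Sum>n. ennreal (cdiam (C n) powr s)) \<le> ennreal \<epsilon>" .
    qed
  qed
qed



definition wt :: "(nat \<Rightarrow> bool list) \<Rightarrow> bool list \<Rightarrow> nat \<Rightarrow> real" where
  "wt p s n = (if prefix s (p n) then (1/2::real) ^ (length (p n) - length s) else 0)"

lemma wt_nonneg: "0 \<le> wt p s n" by (simp add: wt_def)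

lemma wt_bound: "wt p s n \<le> 2 ^ length s * (1/2::real) ^ length (p n)"
proof (cases "prefix s (p n)")
  case True
  then have le: "length s \<le> length (p n)" by (simp add: prefix_length_le)
  have "(1/2::real) ^ length (p n) = (1/2) ^ (length (p n) - length s) * (1/2)^length s"
    using le by (simp flip: power_add)
  then have "2 ^ length s * (1/2::real) ^ length (p n) = (1/2) ^ (length (p n) - length s)"
    by (simp add: power_one_over)
  then show ?thesis using True by (simp add: wt_def)
qed (simp add: wt_def)

lemma wt_children: "wt p (s @ [True]) n + wt p (s @ [False]) n \<le> 2 * wt p s n"
proof (cases "prefix s (p n)")
  case False
  then have "\<not> prefix (s @ [b]) (p n)" for b
    using prefix_order.dual_order.trans by (metis prefix_def append_assoc)
  then show ?thesis using False by (simp add: wt_def)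
next
  case True
  show ?thesis
  proof (cases "p n = s")
    case True
    then show ?thesis by (simp add: wt_def prefix_def)
  next
    case ne: False
    obtain zs where zs: "p n = s @ zs" using True prefix_def by blast
    with ne obtain b zs' where zs': "zs = b # zs'" by (cases zs) auto
    have pb: "prefix (s @ [b']) (p n) \<longleftrightarrow> b' = b" for b'
      using zs zs' by (auto simp: prefix_def)
    have e: "(1/2::real) ^ (length (p n) - length (s@[b])) = 2 * (1/2) ^ (length (p n) - length s)"
      using zs zs' by simp
    show ?thesis
      using pb e True by (cases b) (auto simp: wt_def)
  qed
qed

definition Phi :: "(nat \<Rightarrow> bool list) \<Rightarrow> bool list \<Rightarrow> real" where
  "Phi p s = (\<Sum>n. wt p s n)"

lemma wt_summable:
  assumes "summable (\<lambda>n. (1/2::real) ^ length (p n))"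
  shows "summable (wt p s)"
  by (rule summable_comparison_test[OF _ summable_mult[OF assms, of "2 ^ length s"]])
     (auto simp: wt_nonneg wt_bound)

lemma Phi_children:
  assumes "summable (\<lambda>n. (1/2::real) ^ length (p n))"
  shows "Phi p (s @ [True]) + Phi p (s @ [False]) \<le> 2 * Phi p s"
proof -
  have "Phi p (s @ [True]) + Phi p (s @ [False]) = (\<Sum>n. wt p (s @ [True]) n + wt p (s @ [False]) n)"
    unfolding Phi_def using suminf_add[OF wt_summable[OF assms] wt_summable[OF assms]] by simp
  also have "\<dots> \<le> (\<Sum>n. 2 * wt p s n)"
    by (rule suminf_le) (auto intro!: wt_children summable_add wt_summable[OF assms] summable_mult)
  also have "\<dots> = 2 * Phi p s" unfolding Phi_def
    by (rule suminf_mult[OF wt_summable[OF assms]])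
  finally show ?thesis .
qed

primrec Lst :: "(nat \<Rightarrow> bool list) \<Rightarrow> nat \<Rightarrow> bool list" where
  "Lst p 0 = []"
| "Lst p (Suc k) = Lst p k @ [Phi p (Lst p k @ [True]) \<le> Phi p (Lst p k)]"

lemma Lst_length: "length (Lst p k) = k" by (induct k) auto

lemma Lst_Phi:
  assumes "summable (\<lambda>n. (1/2::real) ^ length (p n))"
  shows "Phi p (Lst p k) \<le> Phi p []"
proof (induct k)
  case (Suc k)
  have "Phi p (Lst p (Suc k)) \<le> Phi p (Lst p k)"
    using Phi_children[OF assms, of "Lst p k"]
    by (cases "Phi p (Lst p k @ [True]) \<le> Phi p (Lst p k)") auto
  then show ?case using Suc by simp
qed simp

lemma Lst_nth: "i < k \<Longrightarrow> Lst p k ! i = Lst p (Suc i) ! i"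
proof (induct k)
  case (Suc k)
  then show ?case
  proof (cases "i < k")
    case False
    then have "i = k" using Suc by simp
    then show ?thesis by simp
  qed (auto simp: nth_append Lst_length)
qed simp

lemma kraft:
  fixes p :: "nat \<Rightarrow> bool list"
  assumes sm: "summable (\<lambda>n. (1/2::real) ^ length (p n))"
    and lt: "(\<Sum>n. (1/2::real) ^ length (p n)) < 1"
  shows "\<exists>y. \<forall>n. \<not> is_prefix (p n) y"
proof -
  define y where "y i = Lst p (Suc i) ! i" for i
  have P0: "Phi p [] = (\<Sum>n. (1/2::real) ^ length (p n))"
    unfolding Phi_def wt_def by simp
  have "\<not> is_prefix (p n) y" for n
  proof
    assume a: "is_prefix (p n) y"
    define m where "m = length (p n)"
    have eq: "p n = Lst p m"
      by (rule nth_equalityI) (use a in \<open>auto simp: Lst_length m_def is_prefix_def y_def Lst_nth\<close>)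
    have "wt p (Lst p m) n = 1" using eq by (simp add: wt_def)
    then have "1 \<le> Phi p (Lst p m)" unfolding Phi_def
      using sum_le_suminf[OF wt_summable[OF sm], of "{n}" "Lst p m"] by (simp add: wt_nonneg)
    then show False using Lst_Phi[OF sm, of m] P0 lt by simp
  qed
  then show ?thesis by blast
qed



definition Enc :: "cantor \<Rightarrow> cantor" where
  "Enc y i = (\<exists>j. i = 2 ^ j \<and> y j)"

lemma Enc_pow: "Enc y (2 ^ j) = y j"
  by (auto simp: Enc_def)

definition Aset :: "cantor set" where "Aset = range Enc"

lemma Aset_HDZ: "Aset \<in> HDZ"
proof (rule HDZ_I)
  fix s :: real assume s: "s > 0"
  define r where "r = (2::real) powr (-s)"
  have "(2::real) powr (-s) < 2 powr 0" by (rule powr_less_mono) (use s in auto)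
  then have r0: "0 < r" and r1: "r < 1" by (auto simp: r_def)
  show "hausdorff_measure s Aset = 0"
  proof (rule hm_zero)
    fix \<delta> \<epsilon> :: real assume d: "\<delta> > 0" and e: "\<epsilon> > 0"
    have t: "(\<lambda>n. of_nat n * r ^ n) \<longlonglongrightarrow> 0"
      by (rule powser_times_n_limit_0) (use r0 r1 in simp)
    have "\<forall>\<^sub>F m in sequentially. (1/2::real) ^ m < \<delta> \<and> real m * r ^ m < \<epsilon>"
      using ev_small[of "1/2" \<delta>] order_tendstoD(2)[OF t e] d by (intro eventually_conj) auto
    then obtain J where J: "\<And>m. m \<ge> J \<Longrightarrow> (1/2::real) ^ m < \<delta> \<and> real m * r ^ m < \<epsilon>"
      by (auto simp: eventually_sequentially)
    define m where "m = (2::nat) ^ J"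
    have mJ: "m \<ge> J" unfolding m_def using less_exp[of J] by simp
    define vs where "vs = List.n_lists J [True, False]"
    have lvs: "length vs = m" by (simp add: vs_def m_def length_n_lists numeral_2_eq_2)
    define str where "str n = map (Enc (\<lambda>j. j < J \<and> (vs ! n) ! j)) [0..<m]" for n
    define C where "C n = (if n < m then {x. is_prefix (str n) x} else {})" for n
    have diam: "cdiam (C n) \<le> 2 powr (- real m)" for n
    proof (cases "n < m")
      case True
      then show ?thesis unfolding C_def
        using cdiam_cyl[of "{x. is_prefix (str n) x}" "str n"] by (simp add: str_def)
    next
      case False
      then show ?thesis by (simp add: C_def cdiam_def)
    qed
    have hm: "2 powr (- real m) = (1/2::real) ^ m"
      by (simp add: powr_minus powr_realpow power_one_over inverse_eq_divide)
    show "\<exists>C. Aset \<subseteq> (\<Union>n. C n) \<and> (\<forall>n. cdiam (C n) \<le> \<delta>)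
            \<and> (\<Sum>n. ennreal (cdiam (C n) powr s)) \<le> ennreal \<epsilon>"
    proof (intro exI conjI allI)
      show "Aset \<subseteq> (\<Union>n. C n)"
      proof
        fix x assume "x \<in> Aset"
        then obtain y where x: "x = Enc y" by (auto simp: Aset_def)
        define v where "v = map y [0..<J]"
        have "v \<in> set vs" by (auto simp: vs_def set_n_lists v_def)
        then obtain n where n: "n < m" "vs ! n = v" using lvs by (auto simp: in_set_conv_nth)
        have "is_prefix (str n) x" unfolding is_prefix_def
        proof (intro allI impI)
          fix i assume "i < length (str n)"
          then have i: "i < 2 ^ J" by (simp add: str_def m_def)
          have "Enc (\<lambda>j. j < J \<and> v ! j) i = Enc y i"
          proof -
            have "(i = 2 ^ j \<and> j < J \<and> v ! j) = (i = 2 ^ j \<and> y j)" for j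
            proof (cases "i = 2 ^ j")
              case True
              then have "j < J" using i by simp
              then show ?thesis using True by (simp add: v_def)
            qed simp
            then show ?thesis by (simp add: Enc_def)
          qed
          then show "str n ! i = x i" using i n x by (simp add: str_def m_def)
        qed
        then have "x \<in> C n" using n by (simp add: C_def)
        then show "x \<in> (\<Union>n. C n)" by blast
      qed
      fix n
      show "cdiam (C n) \<le> \<delta>" using diam[of n] J[OF mJ] hm by linarith
    next
      have le: "cdiam (C n) powr s \<le> r ^ m" for n
      proof -
        have "cdiam (C n) powr s \<le> (2 powr (- real m)) powr s"
          by (rule powr_mono2) (use s diam cdiam_nonneg in auto)
        also have "\<dots> = r ^ m" unfolding pw r_def by simp
        finally show ?thesis .
      qed
      have "(\<Sum>n. ennreal (cdiam (C n) powr s)) = (\<Sum>n<m. ennreal (cdiam (C n) powr s))"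
        by (rule suminf_finite) (auto simp: C_def cdiam_def)
      also have "\<dots> \<le> (\<Sum>n<m. ennreal (r ^ m))"
        by (rule sum_mono) (auto intro: ennreal_leI le)
      also have "\<dots> = ennreal (real m * r ^ m)"
        using r0 by (simp add: ennreal_mult ennreal_of_nat_eq_real_of_nat)
      also have "\<dots> \<le> ennreal \<epsilon>" using J[OF mJ] by (intro ennreal_leI) simp
      finally show "(\<Sum>n. ennreal (cdiam (C n) powr s)) \<le> ennreal \<epsilon>" .
    qed
  qed
qed



definition clog :: "nat \<Rightarrow> nat" where "clog m = (LEAST j. m \<le> 2 ^ j)"

lemma clog_ge: "m \<le> 2 ^ clog m"
  unfolding clog_def by (rule LeastI[of _ m]) (simp add: less_imp_le)

lemma clog_less: "j < clog m \<Longrightarrow> 2 ^ j < m"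
  unfolding clog_def using not_less_Least by fastforce

lemma half_clog: "m > 0 \<Longrightarrow> (1/2::real) ^ clog m \<le> 1 / real m"
proof -
  assume m: "m > 0"
  have "real m \<le> 2 ^ clog m" using clog_ge[of m] by (metis of_nat_le_iff of_nat_numeral of_nat_power)
  then show ?thesis using m by (simp add: power_one_over divide_simps)
qed

lemma Aset_not_J:
  assumes g: "\<forall>\<^sub>F n in sequentially. n ^ 2 \<le> g n"
  shows "Aset \<notin> J_ideal g"
proof
  assume "Aset \<in> J_ideal g"
  then obtain \<sigma> where len: "\<And>n. length (\<sigma> n) = g n" and sub: "Aset \<subseteq> inf_often_set \<sigma>"
    unfolding J_ideal_def by blast
  obtain N0 where N0: "\<And>n. n \<ge> N0 \<Longrightarrow> n ^ 2 \<le> g n" using g by (auto simp: eventually_sequentially)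
  define b where "b n = inverse (real n ^ 2)" for n
  have bs: "summable b" unfolding b_def using inverse_power_summable[of 2] by simp
  obtain N1 where N1: "\<And>n. n \<ge> N1 \<Longrightarrow> norm (\<Sum>i. b (i + n)) < 1"
    using suminf_exist_split[OF _ bs, of 1] by auto
  define N where "N = Suc (max N0 N1)"
  define p where "p n = map (\<lambda>j. \<sigma> (n + N) ! (2 ^ j)) [0..<clog (g (n + N))]" for n
  have wle: "(1/2::real) ^ length (p n) \<le> b (n + N)" for n
  proof -
    have h: "(n + N) ^ 2 \<le> g (n + N)" using N0 by (simp add: N_def)
    have np: "0 < n + N" by (simp add: N_def)
    then have pp: "0 < (n + N) ^ 2" by simp
    then have gp: "0 < g (n + N)" using h by linarith
    have gr: "real ((n + N) ^ 2) \<le> real (g (n + N))" using h by (simp only: of_nat_le_iff)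
    have "(1/2::real) ^ length (p n) \<le> 1 / real (g (n + N))"
      unfolding p_def using half_clog[OF gp] by simp
    also have "\<dots> \<le> 1 / real ((n + N) ^ 2)"
      by (rule divide_left_mono[OF gr]) (use pp gp in \<open>auto intro!: mult_pos_pos simp only: of_nat_0_less_iff\<close>)
    also have "\<dots> = b (n + N)" by (simp add: b_def inverse_eq_divide)
    finally show ?thesis .
  qed
  have bsN: "summable (\<lambda>n. b (n + N))" using bs by simp
  have sm: "summable (\<lambda>n. (1/2::real) ^ length (p n))"
    by (rule summable_comparison_test[OF _ bsN]) (use wle in auto)
  have "(\<Sum>n. (1/2::real) ^ length (p n)) \<le> (\<Sum>n. b (n + N))"
    by (rule suminf_le[OF wle sm bsN])
  also have "\<dots> < 1"
  proof -
    have "N1 \<le> N" by (simp add: N_def)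
    then have "norm (\<Sum>i. b (i + N)) < 1" by (rule N1)
    then show ?thesis by simp
  qed
  finally obtain y where y: "\<And>n. \<not> is_prefix (p n) y" using kraft[OF sm] by blast
  have "Enc y \<in> Aset" by (simp add: Aset_def)
  then have "\<exists>\<^sub>\<infinity>n. is_prefix (\<sigma> n) (Enc y)" using sub by (auto simp: inf_often_set_def)
  then obtain n where n: "n \<ge> N" "is_prefix (\<sigma> n) (Enc y)" by (auto simp: INFM_nat_le)
  have "is_prefix (p (n - N)) y" unfolding is_prefix_def
  proof (intro allI impI)
    fix j assume "j < length (p (n - N))"
    then have j: "j < clog (g n)" using n by (simp add: p_def)
    then have "2 ^ j < length (\<sigma> n)" using clog_less len by simp
    then have "\<sigma> n ! (2 ^ j) = Enc y (2 ^ j)" using n(2) by (simp add: is_prefix_def)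
    then show "p (n - N) ! j = y j" using j n by (simp add: p_def Enc_pow)
  qed
  with y[of "n - N"] show False by simp
qed

theorem theorem3p7:
  shows "yorioka id \<subset> HDZ"
proof
  show "yorioka id \<subseteq> HDZ"
  proof
    fix A assume "A \<in> yorioka id"
    then obtain g where g: "id \<lless> g" and A: "A \<in> J_ideal g" by (auto simp: yorioka_def)
    have "\<forall>\<^sub>F n in sequentially. id (n ^ 1) \<le> g n" using g unfolding ll_def by blast
    then have "\<forall>\<^sub>F n in sequentially. n \<le> g n" by simp
    then show "A \<in> HDZ" using J_HDZ A by blast
  qed
  have "Aset \<notin> yorioka id"
  proof
    assume "Aset \<in> yorioka id"
    then obtain g where g: "id \<lless> g" and A: "Aset \<in> J_ideal g" by (auto simp: yorioka_def)
    have "\<forall>\<^sub>F n in sequentially. id (n ^ 2) \<le> g n" using g unfolding ll_def by blast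
    then have "\<forall>\<^sub>F n in sequentially. n ^ 2 \<le> g n" by simp
    then show False using Aset_not_J A by blast
  qed
  then show "yorioka id \<noteq> HDZ" using Aset_HDZ by blast
qed


end
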